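(* Let $t$ be the Thue-Morse word and $PPL_t$ its prefix palindromic length function. Then for all integers $n\geq 0$: \begin{align*} PPL_t(4n)&=PPL_t(n),\\ PPL_t(4n+1)&=PPL_t(n)+1,\\ PPL_t(4n+2)&=\min(PPL_t(n),PPL_t(n+1))+2,\\ PPL_t(4n+3)&=PPL_t(n+1)+1. \end{align*}
   Context: A palindrome is a finite word $p=p[1]\cdots p[n]$ with $p[i]=p[n-i+1]$ for all $i$. The palindromic length of a finite word $s$ is the minimal number $k$ such that $s$ is a concatenation of $k$ nonempty palindromes (the empty word has palindromic length $0$). For an infinite word $u=u[1]u[2]\cdots$, $PPL_u(n)$ denotes the palindromic length of its prefix $u[1]\cdots u[n]$ of length $n$, with $PPL_u(0)=0$. The Thue-Morse word $t=abbabaabbaababba\cdots$ is the fixed point starting with $a$ of the morphism $\tau: a\mapsto abba,\ b\mapsto baab$. *)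

theory Defs
  imports Main
begin

text \<open>Letters: a is False, b is True.\<close>

definition palindrome :: "'a list \<Rightarrow> bool" where
  "palindrome p \<longleftrightarrow> rev p = p"

definition pal_length :: "'a list \<Rightarrow> nat" where
  "pal_length s = (LEAST k. \<exists>ps. length ps = k \<and> concat ps = s \<and>
                       (\<forall>p\<in>set ps. p \<noteq> [] \<and> palindrome p))"

definition PPL :: "(nat \<Rightarrow> 'a) \<Rightarrow> nat \<Rightarrow> nat" where
  "PPL u n = pal_length (map u [0..<n])"

definition tau_letter :: "bool \<Rightarrow> bool list" where
  "tau_letter x = [x, \<not> x, \<not> x, x]"

definition tau :: "bool list \<Rightarrow> bool list" where
  "tau w = concat (map tau_letter w)"

text \<open>The Thue-Morse word, 0-indexed: letter i (i.e. t[i+1]) is the i-th letter of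
  tau^(i+1)(a), a prefix of the fixed point of length 4^(i+1) > i.\<close>
definition thue_morse :: "nat \<Rightarrow> bool" where
  "thue_morse i = (tau ^^ Suc i) [False] ! i"

end

theory Submission
  imports Defs
begin



lemma tau_append: "tau (xs @ ys) = tau xs @ tau ys"
  by (simp add: tau_def)

lemma len_tau: "length (tau w) = 4 * length w"
  by (induction w) (auto simp: tau_def tau_letter_def)

lemma len_iter: "length ((tau ^^ k) [False]) = 4 ^ k"
  by (induction k) (auto simp: len_tau)

lemma iter_prefix1: "\<exists>v. (tau ^^ Suc k) [False] = (tau ^^ k) [False] @ v"
proof (induction k)
  case 0
  then show ?case by (auto simp: tau_def tau_letter_def)
next
  case (Suc k)
  then obtain v where "(tau ^^ Suc k) [False] = (tau ^^ k) [False] @ v" by blast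
  then have "(tau ^^ Suc (Suc k)) [False] = (tau ^^ Suc k) [False] @ tau v"
    by (simp add: tau_append)
  then show ?case by blast
qed

lemma iter_prefix: "k \<le> k' \<Longrightarrow> \<exists>v. (tau ^^ k') [False] = (tau ^^ k) [False] @ v"
proof (induction k' rule: dec_induct)
  case base
  then show ?case by simp
next
  case (step n)
  then obtain v where v: "(tau ^^ n) [False] = (tau ^^ k) [False] @ v" by blast
  obtain w where "(tau ^^ Suc n) [False] = (tau ^^ n) [False] @ w" using iter_prefix1 by blast
  with v show ?case by auto
qed

lemma iter_nth: "k \<le> k' \<Longrightarrow> i < 4 ^ k \<Longrightarrow> (tau ^^ k') [False] ! i = (tau ^^ k) [False] ! i"
  using iter_prefix[of k k'] by (auto simp: nth_append len_iter)

lemma lt_pow4: "(i::nat) < 4 ^ i"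
proof -
  have "i < 2 ^ i" by (rule less_exp)
  also have "(2::nat) ^ i \<le> 4 ^ i" by (rule power_mono) auto
  finally show ?thesis .
qed

lemma tm_iter: "i < 4 ^ k \<Longrightarrow> thue_morse i = (tau ^^ k) [False] ! i"
proof -
  assume a: "i < 4 ^ k"
  have b: "i < 4 ^ Suc i" using lt_pow4[of "Suc i"] by simp
  have "thue_morse i = (tau ^^ max k (Suc i)) [False] ! i"
    unfolding thue_morse_def using iter_nth[of "Suc i" "max k (Suc i)" i] b by simp
  also have "\<dots> = (tau ^^ k) [False] ! i" using iter_nth[of k "max k (Suc i)" i] a by simp
  finally show ?thesis .
qed

lemma tau_nth: "q < length w \<Longrightarrow> r < 4 \<Longrightarrow> tau w ! (4*q+r) = tau_letter (w!q) ! r"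
proof (induction w arbitrary: q)
  case Nil
  then show ?case by simp
next
  case (Cons x w)
  have tl: "tau (x # w) = tau_letter x @ tau w" by (simp add: tau_def)
  have l4: "length (tau_letter x) = 4" by (simp add: tau_letter_def)
  show ?case
  proof (cases q)
    case 0
    then show ?thesis using Cons.prems tl l4 by (simp add: nth_append)
  next
    case (Suc q')
    have "4 * q + r = 4 + (4*q'+r)" using Suc by simp
    then show ?thesis using Cons tl l4 Suc by (simp add: nth_append)
  qed
qed

lemma tm4: "r < 4 \<Longrightarrow> thue_morse (4*q+r) = tau_letter (thue_morse q) ! r"
proof -
  assume r: "r < 4"
  have q: "q < 4 ^ q" by (rule lt_pow4)
  then have "4*q+r < 4 ^ Suc q" using r by simp
  then have "thue_morse (4*q+r) = (tau ^^ Suc q) [False] ! (4*q+r)" by (rule tm_iter)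
  also have "\<dots> = tau ((tau ^^ q) [False]) ! (4*q+r)" by simp
  also have "\<dots> = tau_letter ((tau ^^ q) [False] ! q) ! r"
    using tau_nth q r len_iter by simp
  also have "\<dots> = tau_letter (thue_morse q) ! r" using tm_iter[OF q] by simp
  finally show ?thesis .
qed

lemma tm40: "thue_morse (4*q) = thue_morse q"
  using tm4[of 0 q] by (simp add: tau_letter_def)
lemma tm41: "thue_morse (4*q+1) = (\<not> thue_morse q)"
  using tm4[of 1 q] by (simp add: tau_letter_def)
lemma tm42: "thue_morse (4*q+2) = (\<not> thue_morse q)"
  using tm4[of 2 q] by (simp add: tau_letter_def)
lemma tm43: "thue_morse (4*q+3) = thue_morse q"
  using tm4[of 3 q] by (simp add: tau_letter_def)

lemma tm2: "thue_morse (2*i) = thue_morse i \<and> thue_morse (2*i+1) = (\<not> thue_morse i)"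
proof (induction i rule: less_induct)
  case (less i)
  show ?case
  proof (cases "even i")
    case True
    then obtain p where p: "i = 2*p" by blast
    show ?thesis
    proof (cases "p = 0")
      case True
      then show ?thesis using p tm41[of 0] by simp
    next
      case False
      then have "p < i" using p by simp
      then have "thue_morse (2*p) = thue_morse p" using less by blast
      moreover have e1: "2*i = 4*p" "2*i+1 = 4*p+1" using p by auto
      moreover have "thue_morse (2*i) = thue_morse (4*p)" "thue_morse (2*i+1) = thue_morse (4*p+1)"
        using e1 by (metis, metis)
      ultimately show ?thesis using p tm40[of p] tm41[of p] by metis
    qed
  next
    case False
    then obtain p where p: "i = 2*p+1" using oddE by blast
    then have "p < i" by simp
    then have "thue_morse (2*p+1) = (\<not> thue_morse p)" using less by blast
    moreover have e1: "2*i = 4*p+2" "2*i+1 = 4*p+3" using p by auto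
    moreover have "thue_morse (2*i) = thue_morse (4*p+2)" "thue_morse (2*i+1) = thue_morse (4*p+3)"
      using e1 by (metis, metis)
    ultimately show ?thesis using p tm42[of p] tm43[of p] by metis
  qed
qed

lemma tm_even: "thue_morse (2*i) = thue_morse i" using tm2 by blast
lemma tm_odd: "thue_morse (2*i+1) = (\<not> thue_morse i)" using tm2 by blast




lemma pl_wit: "\<exists>ps. length ps = pal_length s \<and> concat ps = s \<and> (\<forall>p\<in>set ps. p \<noteq> [] \<and> palindrome p)"
proof -
  have "\<exists>ps. length ps = length s \<and> concat ps = s \<and> (\<forall>p\<in>set ps. p \<noteq> [] \<and> palindrome p)"
    by (rule exI[of _ "map (\<lambda>x. [x]) s"]) (auto simp: palindrome_def)
  then have "\<exists>k. \<exists>ps. length ps = k \<and> concat ps = s \<and> (\<forall>p\<in>set ps. p \<noteq> [] \<and> palindrome p)" by blast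
  then show ?thesis unfolding pal_length_def by (rule LeastI_ex)
qed

lemma pl_le: "concat ps = s \<Longrightarrow> \<forall>p\<in>set ps. p \<noteq> [] \<and> palindrome p \<Longrightarrow> pal_length s \<le> length ps"
  unfolding pal_length_def by (rule Least_le) auto

lemma pl_nil: "pal_length [] = 0"
  using pl_le[of "[]" "[]"] by simp

lemma pl_snoc: "p \<noteq> [] \<Longrightarrow> palindrome p \<Longrightarrow> pal_length (s @ p) \<le> pal_length s + 1"
proof -
  assume a: "p \<noteq> []" "palindrome p"
  obtain ps where ps: "length ps = pal_length s" "concat ps = s" "\<forall>p\<in>set ps. p \<noteq> [] \<and> palindrome p"
    using pl_wit by blast
  have "pal_length (s @ p) \<le> length (ps @ [p])"
    by (rule pl_le) (use ps a in auto)
  then show ?thesis using ps by simp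
qed

lemma pl_last: "s \<noteq> [] \<Longrightarrow> \<exists>s' p. s = s' @ p \<and> p \<noteq> [] \<and> palindrome p \<and> pal_length s = pal_length s' + 1"
proof -
  assume s: "s \<noteq> []"
  obtain ps where ps: "length ps = pal_length s" "concat ps = s" "\<forall>p\<in>set ps. p \<noteq> [] \<and> palindrome p"
    using pl_wit by blast
  then have "ps \<noteq> []" using s by auto
  then obtain ps' p where pp: "ps = ps' @ [p]" by (metis rev_exhaust)
  have s_eq: "s = concat ps' @ p" using ps pp by simp
  have pn: "p \<noteq> []" "palindrome p" using ps pp by auto
  have "pal_length (concat ps') \<le> length ps'" by (rule pl_le) (use ps pp in auto)
  moreover have "pal_length s \<le> pal_length (concat ps') + 1" using pl_snoc[OF pn] s_eq by simp
  ultimately have "pal_length s = pal_length (concat ps') + 1" using ps pp by simp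
  then show ?thesis using s_eq pn by blast
qed

abbreviation tm where "tm \<equiv> thue_morse"
abbreviation ppl where "ppl \<equiv> PPL thue_morse"

definition pal :: "nat \<Rightarrow> nat \<Rightarrow> bool" where
  "pal j m \<longleftrightarrow> (\<forall>k < m - j. tm (j+k) = tm (m - 1 - k))"

lemma palindrome_pal: "palindrome (map tm [j..<m]) \<longleftrightarrow> pal j m"
proof -
  have "rev (map tm [j..<m]) = map tm [j..<m] \<longleftrightarrow> (\<forall>k < m - j. rev (map tm [j..<m]) ! k = map tm [j..<m] ! k)"
    by (simp add: list_eq_iff_nth_eq)
  also have "\<dots> \<longleftrightarrow> (\<forall>k < m - j. tm (m - 1 - k) = tm (j+k))"
    by (intro all_cong) (simp add: rev_nth)
  finally show ?thesis unfolding palindrome_def pal_def by auto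
qed

lemma map_split: "j \<le> m \<Longrightarrow> map tm [0..<m] = map tm [0..<j] @ map tm [j..<m]"
  by (metis map_append le0 upt_add_eq_append le_add_diff_inverse)

lemma dp1: "j < m \<Longrightarrow> pal j m \<Longrightarrow> ppl m \<le> ppl j + 1"
proof -
  assume a: "j < m" "pal j m"
  have "map tm [j..<m] \<noteq> []" using a by simp
  then show ?thesis using pl_snoc[of "map tm [j..<m]" "map tm [0..<j]"] a map_split[of j m]
    palindrome_pal by (simp add: PPL_def)
qed

lemma dp2: "0 < m \<Longrightarrow> \<exists>j<m. pal j m \<and> ppl m = ppl j + 1"
proof -
  assume m: "0 < m"
  then have "map tm [0..<m] \<noteq> []" by simp
  then obtain s' p where sp: "map tm [0..<m] = s' @ p" "p \<noteq> []" "palindrome p"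
    "pal_length (map tm [0..<m]) = pal_length s' + 1" using pl_last by blast
  define j where "j = length s'"
  have jm: "j < m" using sp j_def by (metis length_append length_map length_upt less_add_same_cancel1 length_greater_0_conv minus_nat.diff_0)
  have "s' = take j (map tm [0..<m])" using sp j_def by simp
  then have s': "s' = map tm [0..<j]" using jm by (simp add: take_map)
  have "p = drop j (map tm [0..<m])" using sp j_def by simp
  then have p: "p = map tm [j..<m]" using jm by (simp add: drop_map)
  show ?thesis using sp s' p jm palindrome_pal by (auto simp: PPL_def)
qed

lemma ppl0: "ppl 0 = 0" by (simp add: PPL_def pl_nil)

lemma pal1: "pal j (Suc j)" by (simp add: pal_def)

lemma pal_inner: "pal j m \<Longrightarrow> j + 2 \<le> m \<Longrightarrow> pal (j+1) (m-1)"
  unfolding pal_def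
proof (intro allI impI)
  fix k assume a: "\<forall>k<m - j. tm (j + k) = tm (m - 1 - k)" "j + 2 \<le> m" "k < m - 1 - (j + 1)"
  then have "k+1 < m - j" by auto
  then have "tm (j + (k+1)) = tm (m - 1 - (k+1))" using a(1) by blast
  moreover have "j + (k+1) = j + 1 + k" "m - 1 - (k+1) = m - 1 - 1 - k" using a by auto
  ultimately show "tm (j + 1 + k) = tm (m - 1 - 1 - k)" by metis
qed

lemma ppl_suc: "ppl (Suc x) \<le> ppl x + 1"
  using dp1[OF lessI pal1] .

lemma ppl_pre: "ppl x \<le> ppl (Suc x) + 1"
proof -
  obtain j where j: "j < Suc x" "pal j (Suc x)" "ppl (Suc x) = ppl j + 1" using dp2 by blast
  show ?thesis
  proof (cases "j = x")
    case True then show ?thesis using j by simp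
  next
    case False
    then have "j + 2 \<le> Suc x" using j by simp
    then have pi: "pal (j+1) x" using pal_inner[OF j(2)] by simp
    have "ppl x \<le> ppl (j+1) + 1"
    proof (cases "j + 1 = x")
      case True then show ?thesis by simp
    next
      case False then show ?thesis using dp1[OF _ pi] j \<open>j + 2 \<le> Suc x\<close> by simp
    qed
    also have "\<dots> \<le> ppl j + 2" using ppl_suc[of j] by simp
    finally show ?thesis using j by simp
  qed
qed




lemma tl_sym: "r < 4 \<Longrightarrow> tau_letter x ! r = tau_letter x ! (3 - r)"
  by (cases r; cases "r - 1"; cases "r - 2"; auto simp: tau_letter_def)

lemma key_if: "x = 4*q+r \<Longrightarrow> y = 4*q'+(3-r) \<Longrightarrow> r < 4 \<Longrightarrow> tm q = tm q' \<Longrightarrow> tm x = tm y"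
  using tm4[of r q] tm4[of "3-r" q'] tl_sym[of r] by simp

lemma palA_if: "pal a b \<Longrightarrow> pal (4*a) (4*b)"
  unfolding pal_def
proof (intro allI impI)
  fix k assume p: "\<forall>k<b - a. tm (a + k) = tm (b - 1 - k)" and k: "k < 4 * b - 4 * a"
  define s where "s = k div 4"
  define r where "r = k mod 4"
  have kk: "k = 4*s+r" "r < 4" using s_def r_def by auto
  have "s < b - a" using k kk by linarith
  then have "tm (a+s) = tm (b-1-s)" using p by blast
  moreover have "4*a+k = 4*(a+s)+r" "4*b-1-k = 4*(b-1-s)+(3-r)" using kk k by auto
  ultimately show "tm (4*a+k) = tm (4*b-1-k)" using key_if kk by blast
qed

lemma palB_if: "pal a (b+1) \<Longrightarrow> a \<le> b \<Longrightarrow> pal (4*a+2) (4*b+2)"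
  unfolding pal_def
proof (intro allI impI)
  fix k assume p: "\<forall>k<b + 1 - a. tm (a + k) = tm (b + 1 - 1 - k)" and ab: "a \<le> b" and k: "k < 4*b+2 - (4*a+2)"
  define s where "s = (k+2) div 4"
  define r where "r = (k+2) mod 4"
  have kk: "k+2 = 4*s+r" "r < 4" using s_def r_def by auto
  have "s < b + 1 - a" using k kk by linarith
  then have "tm (a+s) = tm (b+1-1-s)" using p by blast
  moreover have "4*a+2+k = 4*(a+s)+r" "4*b+2-1-k = 4*(b-s)+(3-r)" using kk k by auto
  ultimately show "tm (4*a+2+k) = tm (4*b+2-1-k)" using key_if[of "4*a+2+k" "a+s" r "4*b+2-1-k" "b-s"] kk by simp
qed

lemma palC_if: "pal a (b+1) \<Longrightarrow> a \<le> b \<Longrightarrow> pal (4*a+1) (4*b+3)"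
  unfolding pal_def
proof (intro allI impI)
  fix k assume p: "\<forall>k<b + 1 - a. tm (a + k) = tm (b + 1 - 1 - k)" and ab: "a \<le> b" and k: "k < 4*b+3 - (4*a+1)"
  define s where "s = (k+1) div 4"
  define r where "r = (k+1) mod 4"
  have kk: "k+1 = 4*s+r" "r < 4" using s_def r_def by auto
  have "s < b + 1 - a" using k kk by linarith
  then have "tm (a+s) = tm (b+1-1-s)" using p by blast
  moreover have "4*a+1+k = 4*(a+s)+r" "4*b+3-1-k = 4*(b-s)+(3-r)" using kk k by auto
  ultimately show "tm (4*a+1+k) = tm (4*b+3-1-k)" using key_if[of "4*a+1+k" "a+s" r "4*b+3-1-k" "b-s"] kk by simp
qed

lemma palA_oi: "pal (4*a) (4*b) \<Longrightarrow> pal a b"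
  unfolding pal_def
proof (intro allI impI)
  fix k assume p: "\<forall>k<4*b - 4*a. tm (4*a + k) = tm (4*b - 1 - k)" and k: "k < b - a"
  have "4*k < 4*b-4*a" using k by simp
  then have "tm (4*a + 4*k) = tm (4*b - 1 - 4*k)" using p by blast
  moreover have "4*a+4*k = 4*(a+k)" "4*b-1-4*k = 4*(b-1-k)+3" using k by auto
  ultimately show "tm (a+k) = tm (b-1-k)" using tm40 tm43 by metis
qed

lemma palB_oi: "pal (4*a+2) (4*b+2) \<Longrightarrow> a \<le> b \<Longrightarrow> pal a (b+1)"
  unfolding pal_def
proof (intro allI impI)
  fix k assume p: "\<forall>k<4*b+2 - (4*a+2). tm (4*a+2 + k) = tm (4*b+2 - 1 - k)" and ab: "a \<le> b" and k: "k < b + 1 - a"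
  have gen: "tm (a+k') = tm (b-k')" if k': "k' < b - a" for k'
  proof -
    have "4*k' < 4*b+2 - (4*a+2)" using k' by simp
    then have "tm (4*a+2 + 4*k') = tm (4*b+2 - 1 - 4*k')" using p by blast
    moreover have "4*a+2+4*k' = 4*(a+k')+2" "4*b+2-1-4*k' = 4*(b-k')+1" using k' by auto
    ultimately show ?thesis using tm42 tm41 by metis
  qed
  show "tm (a+k) = tm (b+1-1-k)"
  proof (cases "k < b - a")
    case True then show ?thesis using gen by simp
  next
    case False
    then have kb: "k = b - a" using k by simp
    show ?thesis
    proof (cases "a = b")
      case True then show ?thesis using kb by simp
    next
      case False
      then have "tm (a+0) = tm (b-0)" using gen[of 0] ab by simp
      then show ?thesis using kb ab by simp
    qed
  qed
qed

lemma palC_oi: "pal (4*a+1) (4*b+3) \<Longrightarrow> pal a (b+1)"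
  unfolding pal_def
proof (intro allI impI)
  fix k assume p: "\<forall>k<4*b+3 - (4*a+1). tm (4*a+1 + k) = tm (4*b+3 - 1 - k)" and k: "k < b + 1 - a"
  have "4*k < 4*b+3 - (4*a+1)" using k by simp
  then have "tm (4*a+1 + 4*k) = tm (4*b+3 - 1 - 4*k)" using p by blast
  moreover have "4*a+1+4*k = 4*(a+k)+1" "4*b+3-1-4*k = 4*(b-k)+2" using k by auto
  ultimately have "tm (a+k) = tm (b-k)" using tm42 tm41 by metis
  then show "tm (a+k) = tm (b+1-1-k)" by simp
qed

lemma palD_oi: "pal (4*a+3) (4*b+1) \<Longrightarrow> a < b \<Longrightarrow> pal a (b+1)"
  unfolding pal_def
proof (intro allI impI)
  fix k assume p: "\<forall>k<4*b+1 - (4*a+3). tm (4*a+3 + k) = tm (4*b+1 - 1 - k)" and ab: "a < b" and k: "k < b + 1 - a"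
  show "tm (a+k) = tm (b+1-1-k)"
  proof (cases "k = 0")
    case True
    have "0 < 4*b+1 - (4*a+3)" using ab by simp
    then have "tm (4*a+3 + 0) = tm (4*b+1 - 1 - 0)" using p by blast
    then show ?thesis using True tm43[of a] tm40[of b] by simp
  next
    case False
    have "4*k-3 < 4*b+1 - (4*a+3)" using k False by simp
    then have "tm (4*a+3 + (4*k-3)) = tm (4*b+1 - 1 - (4*k-3))" using p by blast
    moreover have "4*a+3+(4*k-3) = 4*(a+k)" "4*b+1-1-(4*k-3) = 4*(b-k)+3" using k False by auto
    ultimately have "tm (a+k) = tm (b-k)" using tm40 tm43 by metis
    then show ?thesis by simp
  qed
qed

lemma no_adj: "even e \<Longrightarrow> tm e \<noteq> tm (e+1)"
  using tm_even tm_odd by (metis evenE)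

lemma no_cube: "\<not> (tm x = tm (x+1) \<and> tm (x+1) = tm (x+2))"
proof (cases "even x")
  case True then show ?thesis using no_adj by blast
next
  case False then have "even (x+1)" by simp
  then show ?thesis using no_adj[of "x+1"] by simp
qed

lemma no_odd5: "pal j m \<Longrightarrow> m - j = 2*h+1 \<Longrightarrow> h \<ge> 2 \<Longrightarrow> False"
proof -
  assume p: "pal j m" and L: "m - j = 2*h+1" and h: "h \<ge> 2"
  define c where "c = j + h"
  have e1: "tm (c-2) = tm (c+2)"
  proof -
    have "h - 2 < m - j" using L by simp
    then have "tm (j + (h-2)) = tm (m - 1 - (h-2))" using p unfolding pal_def by blast
    moreover have "j + (h-2) = c-2" "m - 1 - (h-2) = c+2" using L h c_def by auto
    ultimately show ?thesis by simp
  qed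
  have e2: "tm (c-1) = tm (c+1)"
  proof -
    have "h - 1 < m - j" using L by simp
    then have "tm (j + (h-1)) = tm (m - 1 - (h-1))" using p unfolding pal_def by blast
    moreover have "j + (h-1) = c-1" "m - 1 - (h-1) = c+1" using L h c_def by auto
    ultimately show ?thesis by simp
  qed
  have c2: "c \<ge> 2" using h c_def by simp
  show False
  proof (cases "even c")
    case True
    then obtain i where i: "c = 2*i" by blast
    then have i1: "i \<ge> 1" using c2 by simp
    have "c-1 = 2*(i-1)+1" "c+1 = 2*i+1" "c-2 = 2*(i-1)"
      "c+2 = 2*(i+1)" using i i1 by auto
    then have "tm (i-1) = tm i" "tm (i-1) = tm (i+1)" using e1 e2 tm_even tm_odd by metis+
    then show False using no_cube[of "i-1"] i1 by simp
  next
    case False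
    then obtain i where i: "c = 2*i+1" using oddE by blast
    then have i1: "i \<ge> 1" using c2 by simp
    have "c-1 = 2*i" "c+1 = 2*(i+1)" "c-2 = 2*(i-1)+1"
      "c+2 = 2*(i+1)+1" using i i1 by auto
    then have "tm i = tm (i+1)" "tm (i-1) = tm (i+1)" using e1 e2 tm_even tm_odd by metis+
    then show False using no_cube[of "i-1"] i1 by simp
  qed
qed

lemma even_center: "pal j m \<Longrightarrow> m - j = 2*h \<Longrightarrow> h \<ge> 1 \<Longrightarrow> (j + m) mod 4 = 0"
proof -
  assume p: "pal j m" and L: "m - j = 2*h" and h: "h \<ge> 1"
  have "h - 1 < m - j" using L h by arith
  then have "tm (j + (h-1)) = tm (m - 1 - (h-1))" using p unfolding pal_def by blast
  moreover have "m - 1 - (h-1) = j + (h-1) + 1" using L h by auto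
  ultimately have "\<not> even (j + (h-1))" using no_adj by metis
  then show ?thesis using L h by presburger
qed

lemma classify: "pal j m \<Longrightarrow> j < m \<Longrightarrow>
  m = j+1 \<or> (m = j+3 \<and> tm j = tm (j+2)) \<or>
  (j mod 4 = 0 \<and> m mod 4 = 0 \<and> pal (j div 4) (m div 4)) \<or>
  (j mod 4 = 2 \<and> m mod 4 = 2 \<and> pal (j div 4) (m div 4 + 1)) \<or>
  (j mod 4 = 1 \<and> m mod 4 = 3 \<and> pal (j div 4) (m div 4 + 1)) \<or>
  (j mod 4 = 3 \<and> m mod 4 = 1 \<and> pal (j div 4) (m div 4 + 1))"
proof -
  assume p: "pal j m" and jm: "j < m"
  define a where "a = j div 4"
  define b where "b = m div 4"
  show ?thesis
  proof (cases "even (m - j)")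
    case False
    then obtain h where L: "m - j = 2*h+1" using oddE by blast
    show ?thesis
    proof (cases "h \<ge> 2")
      case True then show ?thesis using no_odd5[OF p L] by blast
    next
      case False
      then have "h = 0 \<or> h = 1" by auto
      then show ?thesis
      proof
        assume "h = 0" then have "m = j+1" using L jm by simp
        then show ?thesis by simp
      next
        assume h1: "h = 1"
        then have "m = j + 3" using L jm by simp
        moreover have "tm (j+0) = tm (m-1-0)" using p jm unfolding pal_def by (meson zero_less_diff)
        ultimately show ?thesis by simp
      qed
    qed
  next
    case True
    then obtain h where L: "m - j = 2*h" by blast
    then have h: "h \<ge> 1" using jm by simp
    have c: "(j+m) mod 4 = 0" using even_center[OF p L h] .
    have "j mod 4 = 0 \<or> j mod 4 = 1 \<or> j mod 4 = 2 \<or> j mod 4 = 3" by auto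
    then show ?thesis
    proof (elim disjE)
      assume j0: "j mod 4 = 0"
      then have "j = 4*a" "m = 4*b" "m mod 4 = 0" using c a_def b_def by presburger+
      then show ?thesis using palA_oi p j0 a_def b_def by metis
    next
      assume j1: "j mod 4 = 1"
      have "m mod 4 = 3" using c j1 by presburger
      have "j = 4*a+1" using j1 a_def by presburger
      have "m = 4*b+3" using \<open>m mod 4 = 3\<close> b_def by presburger
      then have "pal a (b + 1)" using palC_oi p \<open>j = 4*a+1\<close> by metis
      then show ?thesis using j1 a_def b_def \<open>m mod 4 = 3\<close> by simp
    next
      assume j2: "j mod 4 = 2"
      then have "j = 4*a+2" "m = 4*b+2" "m mod 4 = 2" "a \<le> b" using c a_def b_def jm by presburger+
      then show ?thesis using palB_oi p j2 a_def b_def by metis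
    next
      assume j3: "j mod 4 = 3"
      then have "j = 4*a+3" "m = 4*b+1" "m mod 4 = 1" "a < b" using c a_def b_def jm by presburger+
      then show ?thesis using palD_oi p j3 a_def b_def by metis
    qed
  qed
qed




definition FF :: "nat \<Rightarrow> nat" where
  "FF m = (if m mod 4 = 0 then ppl (m div 4) else if m mod 4 = 1 then ppl (m div 4) + 1
     else if m mod 4 = 2 then min (ppl (m div 4)) (ppl (m div 4 + 1)) + 2 else ppl (m div 4 + 1) + 1)"

lemma F0: "FF (4*q) = ppl q" by (simp add: FF_def)
lemma F1: "FF (4*q+1) = ppl q + 1"
proof -
  have "(4*q+1) mod 4 = 1" "(4*q+1) div 4 = q" by presburger+
  then show ?thesis unfolding FF_def by simp
qed
lemma F2: "FF (4*q+2) = min (ppl q) (ppl (q+1)) + 2"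
proof -
  have "(4*q+2) mod 4 = 2" "(4*q+2) div 4 = q" by presburger+
  then show ?thesis unfolding FF_def by simp
qed
lemma F3: "FF (4*q+3) = ppl (q+1) + 1"
proof -
  have "(4*q+3) mod 4 = 3" "(4*q+3) div 4 = q" by presburger+
  then show ?thesis unfolding FF_def by simp
qed

lemma m_cases: fixes m :: nat obtains q where "m = 4*q" | q where "m = 4*q+1" | q where "m = 4*q+2" | q where "m = 4*q+3"
proof -
  have "m = 4*(m div 4) \<or> m = 4*(m div 4)+1 \<or> m = 4*(m div 4)+2 \<or> m = 4*(m div 4)+3" by presburger
  then show ?thesis using that by blast
qed

lemma ppl_inner: "pal a (n+1) \<Longrightarrow> a < n \<Longrightarrow> ppl n \<le> ppl (a+1) + 1"
proof (cases "a + 1 = n")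
  case True then show ?thesis by simp
next
  case False
  assume p: "pal a (n+1)" and an: "a < n"
  then have "pal (a+1) n" using pal_inner[OF p] by simp
  then show ?thesis using dp1[of "a+1" n] an False by simp
qed

lemma LB: "j < m \<Longrightarrow> pal j m \<Longrightarrow> FF m \<le> FF j + 1"
proof -
  assume jm: "j < m" and p: "pal j m"
  note cl = classify[OF p jm]
  have s1: "ppl (Suc x) \<le> ppl x + 1" "ppl x \<le> ppl (Suc x) + 1" for x using ppl_suc ppl_pre by auto
  consider (a) "m = j+1" | (b) "m = j+3 \<and> tm j = tm (j+2)" |
    (c) "j mod 4 = 0 \<and> m mod 4 = 0 \<and> pal (j div 4) (m div 4)" |
    (d) "j mod 4 = 2 \<and> m mod 4 = 2 \<and> pal (j div 4) (m div 4 + 1)" |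
    (e) "j mod 4 = 1 \<and> m mod 4 = 3 \<and> pal (j div 4) (m div 4 + 1)" |
    (f) "j mod 4 = 3 \<and> m mod 4 = 1 \<and> pal (j div 4) (m div 4 + 1)" using cl by blast
  then show ?thesis
  proof cases
    case a
    show ?thesis
    proof (cases m rule: m_cases)
      case (1 q)
      then have "q \<ge> 1" using jm by simp
      then have "j = 4*(q-1)+3" using 1 a by simp
      then show ?thesis using 1 F0 F3 \<open>q \<ge> 1\<close> by simp
    next
      case (2 q) then have "j = 4*q" using a by simp
      then show ?thesis using 2 F0 F1 by simp
    next
      case (3 q) then have "j = 4*q+1" using a by simp
      then show ?thesis using 3 F1 F2 by simp
    next
      case (4 q) then have "j = 4*q+2" using a by simp
      then show ?thesis using 4 F2 F3 s1[of q] by simp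
    qed
  next
    case b
    show ?thesis
    proof (cases m rule: m_cases)
      case (1 q)
      then have "q \<ge> 1" using jm b by simp
      then have "j = 4*(q-1)+1" using 1 b by simp
      then show ?thesis using 1 F0 F1 \<open>q \<ge> 1\<close> s1[of "q-1"] by simp
    next
      case (2 q)
      then have "q \<ge> 1" using jm b by simp
      then have "j = 4*(q-1)+2" using 2 b by simp
      then show ?thesis using 2 F2 F1 \<open>q \<ge> 1\<close> s1[of "q-1"] by simp
    next
      case (3 q)
      then have "q \<ge> 1" using jm b by simp
      then have "j = 4*(q-1)+3" using 3 b by simp
      then show ?thesis using 3 F3 F2 \<open>q \<ge> 1\<close> by simp
    next
      case (4 q) then have "j = 4*q" using b by simp
      then have "tm (4*q) = tm (4*q+2)" using b by simp
      then show ?thesis using tm40 tm42 by simp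
    qed
  next
    case c
    define a where "a = j div 4"
    define n where "n = m div 4"
    have e1: "j = 4*a" using conjunct1[OF c] conjunct1[OF conjunct2[OF c]] unfolding a_def by presburger
    have e2: "m = 4*n" using conjunct1[OF c] conjunct1[OF conjunct2[OF c]] unfolding n_def by presburger
    note e = e1 e2
    then have "a < n" using jm by simp
    have pa: "pal a n" using c a_def n_def by simp
    show ?thesis using e F0 dp1[OF \<open>a < n\<close> pa] by simp
  next
    case d
    define a where "a = j div 4"
    define n where "n = m div 4"
    have e1: "j = 4*a+2" using conjunct1[OF d] conjunct1[OF conjunct2[OF d]] unfolding a_def by presburger
    have e2: "m = 4*n+2" using conjunct1[OF d] conjunct1[OF conjunct2[OF d]] unfolding n_def by presburger
    note e = e1 e2
    then have an: "a < n" using jm by simp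
    have pa: "pal a (n+1)" using d a_def n_def by simp
    have "ppl (n+1) \<le> ppl a + 1" using dp1[OF _ pa] an by simp
    moreover have "ppl n \<le> ppl (a+1) + 1" using ppl_inner[OF pa an] .
    ultimately show ?thesis using e F2 by simp
  next
    case e
    define a where "a = j div 4"
    define n where "n = m div 4"
    have ee1: "j = 4*a+1" using conjunct1[OF e] conjunct1[OF conjunct2[OF e]] unfolding a_def by presburger
    have ee2: "m = 4*n+3" using conjunct1[OF e] conjunct1[OF conjunct2[OF e]] unfolding n_def by presburger
    note ee = ee1 ee2
    then have an: "a \<le> n" using jm by simp
    have pa: "pal a (n+1)" using e a_def n_def by simp
    have "ppl (n+1) \<le> ppl a + 1" using dp1[OF _ pa] an by simp
    then show ?thesis using ee F1 F3 by simp
  next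
    case f
    define a where "a = j div 4"
    define n where "n = m div 4"
    have e1: "j = 4*a+3" using conjunct1[OF f] conjunct1[OF conjunct2[OF f]] unfolding a_def by presburger
    have e2: "m = 4*n+1" using conjunct1[OF f] conjunct1[OF conjunct2[OF f]] unfolding n_def by presburger
    note e = e1 e2
    then have an: "a < n" using jm by simp
    have pa: "pal a (n+1)" using f a_def n_def by simp
    have "ppl n \<le> ppl (a+1) + 1" using ppl_inner[OF pa an] .
    then show ?thesis using e F1 F3 by simp
  qed
qed

lemma EX: "0 < m \<Longrightarrow> \<exists>j<m. pal j m \<and> FF m = FF j + 1"
proof (cases m rule: m_cases)
  case (1 q)
  assume "0 < m"
  then have "0 < q" using 1 by simp
  then obtain a where a: "a < q" "pal a q" "ppl q = ppl a + 1" using dp2 by blast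
  have "4*a < m" "pal (4*a) m" using a 1 palA_if by auto
  moreover have "FF m = FF (4*a) + 1" using a 1 F0 by simp
  ultimately show ?thesis by blast
next
  case (2 q)
  have "4*q < m" "pal (4*q) m" using 2 pal1 by auto
  moreover have "FF m = FF (4*q) + 1" using 2 F0 F1 by simp
  ultimately show ?thesis by blast
next
  case (3 q)
  show ?thesis
  proof (cases "ppl q \<le> ppl (q+1)")
    case True
    have "4*q+1 < m" "pal (4*q+1) m" using 3 pal1 by auto
    moreover have "FF m = FF (4*q+1) + 1" using 3 F2 F1 True by simp
    ultimately show ?thesis by blast
  next
    case False
    obtain a where a: "a < q+1" "pal a (q+1)" "ppl (q+1) = ppl a + 1" using dp2[of "q+1"] by auto
    have "a \<noteq> q" using a False by auto
    then have aq: "a < q" using a by simp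
    have "ppl q \<le> ppl (a+1) + 1" using ppl_inner[OF a(2) aq] .
    then have mn: "min (ppl a) (ppl (a+1)) = ppl a" using a False by simp
    have "4*a+2 < m" "pal (4*a+2) m" using 3 aq palB_if[OF a(2)] by auto
    moreover have "FF m = FF (4*a+2) + 1" using 3 F2 mn a False by simp
    ultimately show ?thesis by blast
  qed
next
  case (4 q)
  obtain a where a: "a < q+1" "pal a (q+1)" "ppl (q+1) = ppl a + 1" using dp2[of "q+1"] by auto
  have "4*a+1 < m" "pal (4*a+1) m" using 4 a palC_if[OF a(2)] by auto
  moreover have "FF m = FF (4*a+1) + 1" using 4 F3 F1 a by simp
  ultimately show ?thesis by blast
qed

lemma main: "ppl m = FF m"
proof (induction m rule: less_induct)
  case (less m)
  show ?case
  proof (cases "m = 0")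
    case True then show ?thesis using ppl0 F0[of 0] by simp
  next
    case False
    then have m: "0 < m" by simp
    obtain j where j: "j < m" "pal j m" "FF m = FF j + 1" using EX[OF m] by blast
    obtain j' where j': "j' < m" "pal j' m" "ppl m = ppl j' + 1" using dp2[OF m] by blast
    have "ppl m \<le> FF m" using dp1[OF j(1,2)] less[OF j(1)] j(3) by simp
    moreover have "FF m \<le> ppl m" using LB[OF j'(1,2)] less[OF j'(1)] j'(3) by simp
    ultimately show ?thesis by simp
  qed
qed

theorem theorem4:
  fixes n :: nat
  shows "PPL thue_morse (4*n) = PPL thue_morse n \<and>
         PPL thue_morse (4*n+1) = PPL thue_morse n + 1 \<and>
         PPL thue_morse (4*n+2) = min (PPL thue_morse n) (PPL thue_morse (n+1)) + 2 \<and>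
         PPL thue_morse (4*n+3) = PPL thue_morse (n+1) + 1"
  using main[of "4*n"] main[of "4*n+1"] main[of "4*n+2"] main[of "4*n+3"] F0 F1 F2 F3 by simp


end
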